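(* Let $\rho$ be a probability density on $[-\pi,\pi]$ whose Fourier series converges absolutely and with $\int_{-\pi}^\pi\rho(\theta)\sin\theta\cos\theta\,\mathrm{d}\theta=0$. For $K\in\mathbb{N}$ let $$p_K(\theta)=\frac{1}{2K+1}\Big(\sum_{k=-K}^Ke^{ik\theta}\Big)^2,\qquad\rho_K(\theta)=\frac{1}{2\pi}\int_{-\pi}^\pi\rho(\theta-\phi)p_K(\phi)\,\mathrm{d}\phi,$$ $$\nu_K(\mathrm{d}\theta)=\frac{2\pi}{4K+1}\sum_{\ell=-2K}^{2K}\rho_K\Big(\frac{2\pi\ell}{4K+1}\Big)\delta\Big(\theta-\frac{2\pi\ell}{4K+1}\Big)\mathrm{d}\theta.$$ Then each $\nu_K$ is a discrete probability measure on $[-\pi,\pi]$, $\int_{-\pi}^\pi\cos\theta\sin\theta\,\nu_K(\mathrm{d}\theta)=0$ for all $K$, and for every continuous $f$ on $[-\pi,\pi]$, $\lim_{K\to\infty}\int f\,\mathrm{d}\nu_K=\int_{-\pi}^\pi f(\theta)\rho(\theta)\,\mathrm{d}\theta$.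
   Context: $\rho$ is extended $2\pi$-periodically in the convolution. *)

theory Defs
  imports "HOL-Probability.Probability"
begin

definition fourier_coeff :: "(real \<Rightarrow> real) \<Rightarrow> int \<Rightarrow> complex" where
  "fourier_coeff \<rho> k =
     (LINT \<theta>:{-pi..pi}|lborel. complex_of_real (\<rho> \<theta>) * exp (- \<i> * of_int k * complex_of_real \<theta>))
     / complex_of_real (2 * pi)"

text \<open>2 pi-periodic extension of a function given on [-pi,pi) (its values elsewhere are ignored).\<close>
definition per_ext :: "(real \<Rightarrow> real) \<Rightarrow> real \<Rightarrow> real" where
  "per_ext \<rho> x = \<rho> (x - 2 * pi * of_int \<lfloor>(x + pi) / (2 * pi)\<rfloor>)"

text \<open>p_K(theta) = (1/(2K+1)) (sum_{k=-K}^K e^{ik theta})^2; the square is real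
  (the inner sum is the real Dirichlet kernel), so we take the real part.\<close>
definition pK :: "nat \<Rightarrow> real \<Rightarrow> real" where
  "pK K \<theta> = Re ((\<Sum>k\<in>{-int K..int K}. exp (\<i> * of_int k * complex_of_real \<theta>)) ^ 2)
              / (2 * real K + 1)"

definition rhoK :: "(real \<Rightarrow> real) \<Rightarrow> nat \<Rightarrow> real \<Rightarrow> real" where
  "rhoK \<rho> K \<theta> = (1 / (2 * pi)) * (LBINT \<phi>=-pi..pi. per_ext \<rho> (\<theta> - \<phi>) * pK K \<phi>)"

definition grid_pt :: "nat \<Rightarrow> int \<Rightarrow> real" where
  "grid_pt K l = 2 * pi * real_of_int l / (4 * real K + 1)"

definition nuK :: "(real \<Rightarrow> real) \<Rightarrow> nat \<Rightarrow> real measure" where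
  "nuK \<rho> K = point_measure UNIV
     (\<lambda>\<theta>. ennreal (\<Sum>l\<in>{-2 * int K..2 * int K}.
        if \<theta> = grid_pt K l then 2 * pi / (4 * real K + 1) * rhoK \<rho> K (grid_pt K l) else 0))"

end

theory Submission
  imports Defs
begin
definition Dk :: "nat \<Rightarrow> real \<Rightarrow> real" where
  "Dk K x = 1 + 2 * (\<Sum>k=1..K. cos (real k * x))"

lemma two_cos_exp: "exp (\<i> * of_int (int n) * complex_of_real x) + exp (\<i> * of_int (- int n) * complex_of_real x)
   = complex_of_real (2 * cos (real n * x))"
proof -
  have "exp (\<i> * of_int (int n) * complex_of_real x) = cis (real n * x)"
    by (simp add: cis_conv_exp mult.commute mult.left_commute)
  moreover have "exp (\<i> * of_int (- int n) * complex_of_real x) = cis (- (real n * x))"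
    by (simp add: cis_conv_exp mult.commute mult.left_commute)
  ultimately show ?thesis by (simp add: complex_eq_iff cis.sel)
qed

lemma dir_sum: "(\<Sum>k\<in>{-int K..int K}. exp (\<i> * of_int k * complex_of_real x)) = complex_of_real (Dk K x)"
proof (induction K)
  case 0
  then show ?case by (simp add: Dk_def)
next
  case (Suc K)
  have eq: "{-int (Suc K)..int (Suc K)} = insert (-int (Suc K)) (insert (int (Suc K)) {-int K..int K})"
    by auto
  have "(\<Sum>k\<in>{-int (Suc K)..int (Suc K)}. exp (\<i> * of_int k * complex_of_real x))
     = exp (\<i> * of_int (int (Suc K)) * complex_of_real x) + exp (\<i> * of_int (- int (Suc K)) * complex_of_real x)
       + (\<Sum>k\<in>{-int K..int K}. exp (\<i> * of_int k * complex_of_real x))"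
    unfolding eq by (simp add: algebra_simps)
  also have "\<dots> = complex_of_real (Dk (Suc K) x)"
    unfolding two_cos_exp Suc by (simp add: Dk_def algebra_simps)
  finally show ?case .
qed

lemma pK_Dk: "pK K x = (Dk K x)^2 / (2 * real K + 1)"
  unfolding pK_def dir_sum by (simp flip: of_real_power)

lemma pK_complex: "complex_of_real (pK K x) =
   (\<Sum>j\<in>{-int K..int K}. exp (\<i> * of_int j * complex_of_real x)) *
   (\<Sum>k\<in>{-int K..int K}. exp (\<i> * of_int k * complex_of_real x)) / (2 * of_nat K + 1)"
  unfolding pK_Dk dir_sum by (simp add: power2_eq_square)

lemma pK_nonneg: "pK K x \<ge> 0"
  unfolding pK_Dk by simp

lemma Dk_sin: "Dk K x * sin (x/2) = sin ((2 * real K + 1) * x / 2)"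
proof (induction K)
  case 0
  then show ?case by (simp add: Dk_def)
next
  case (Suc K)
  have "Dk (Suc K) x = Dk K x + 2 * cos (real (Suc K) * x)" by (simp add: Dk_def)
  then have "Dk (Suc K) x * sin (x/2) = sin ((2 * real K + 1) * x / 2) + 2 * cos (real (Suc K) * x) * sin (x/2)"
    using Suc by (simp add: algebra_simps)
  also have "2 * cos (real (Suc K) * x) * sin (x/2) = sin (real (Suc K) * x + x/2) - sin (real (Suc K) * x - x/2)"
    by (simp add: sin_add sin_diff)
  also have "real (Suc K) * x - x/2 = (2 * real K + 1) * x / 2" by (simp add: algebra_simps)
  also have "real (Suc K) * x + x/2 = (2 * real (Suc K) + 1) * x / 2" by (simp add: algebra_simps)
  finally show ?case by simp
qed

lemma Dk_bound: "\<bar>Dk K x\<bar> \<le> 2 * real K + 1"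
proof (induction K)
  case 0 then show ?case by (simp add: Dk_def)
next
  case (Suc K)
  have "Dk (Suc K) x = Dk K x + 2 * cos (real (Suc K) * x)" by (simp add: Dk_def)
  moreover have "cos (real (Suc K) * x) \<le> 1" "-1 \<le> cos (real (Suc K) * x)" by simp_all
  moreover have "- (2 * real K + 1) \<le> Dk K x" "Dk K x \<le> 2 * real K + 1" using Suc by (auto simp: abs_le_iff)
  ultimately show ?case unfolding abs_le_iff of_nat_Suc by argo
qed

lemma pK_bound: "pK K x \<le> 2 * real K + 1"
proof -
  have "(Dk K x)^2 \<le> (2 * real K + 1)^2"
    using Dk_bound[of K x] by (metis abs_le_square_iff abs_of_nonneg of_nat_0_le_iff add_nonneg_nonneg mult_nonneg_nonneg zero_le_numeral zero_le_one)
  then show ?thesis unfolding pK_Dk by (simp add: divide_le_eq power2_eq_square)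
qed

lemma Dk_periodic: "Dk K (x + 2 * pi * of_int n) = Dk K x"
proof -
  have "cos (real k * (x + 2 * pi * of_int n)) = cos (real k * x)" for k
  proof -
    have "real k * (x + 2 * pi * of_int n) = real k * x + (2 * pi) * of_int (int k * n)" by (simp add: algebra_simps)
    then show ?thesis by (simp only: cos_add cos_int_2pin sin_int_2pin) simp?
  qed
  then show ?thesis by (simp add: Dk_def)
qed

lemma pK_periodic: "pK K (x + 2 * pi * of_int n) = pK K x"
  by (simp add: pK_Dk Dk_periodic)
lemma continuous_pK: "continuous_on UNIV (pK K)"
  unfolding pK_Dk Dk_def by (intro continuous_intros) auto

lemma root_sum:
  fixes n :: int
  assumes n0: "n \<noteq> 0" and nb: "\<bar>n\<bar> < 4 * int K + 1"
  shows "(\<Sum>l\<in>{-2*int K..2*int K}. exp (\<i> * of_int n * complex_of_real (grid_pt K l))) = 0"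
proof -
  define N where "N = 4 * K + 1"
  have Npos: "N > 0" by (simp add: N_def)
  define a where "a = 2 * pi / real N"
  have Na: "real N * a = 2 * pi" using Npos by (simp add: a_def)
  have gp: "grid_pt K l = a * of_int l" for l by (simp add: grid_pt_def a_def N_def)
  define z where "z = exp (\<i> * of_int n * complex_of_real a)"
  define w where "w = exp (- (\<i> * of_int n * complex_of_real a * of_int (2 * int K)))"
  have img: "{-2*int K..2*int K} = (\<lambda>j. int j - 2 * int K) ` {..<N}"
  proof (rule set_eqI)
    fix l :: int
    show "l \<in> {-2*int K..2*int K} \<longleftrightarrow> l \<in> (\<lambda>j. int j - 2 * int K) ` {..<N}"
    proof
      assume "l \<in> {-2*int K..2*int K}"
      then have "l = int (nat (l + 2 * int K)) - 2 * int K" "nat (l + 2 * int K) < N"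
        by (auto simp: N_def)
      then show "l \<in> (\<lambda>j. int j - 2 * int K) ` {..<N}" by blast
    qed (auto simp: N_def)
  qed
  have inj: "inj_on (\<lambda>j. int j - 2 * int K) {..<N}" by (auto simp: inj_on_def)
  have term_eq: "exp (\<i> * of_int n * complex_of_real (grid_pt K (int j - 2 * int K))) = w * z ^ j" for j
  proof -
    have "\<i> * of_int n * complex_of_real (grid_pt K (int j - 2 * int K))
        = - (\<i> * of_int n * complex_of_real a * of_int (2 * int K)) + of_nat j * (\<i> * of_int n * complex_of_real a)"
      by (simp add: gp algebra_simps)
    then show ?thesis unfolding w_def z_def by (simp only: exp_add exp_of_nat_mult)
  qed
  have zN: "z ^ N = 1"
  proof -
    have "z ^ N = exp (of_nat N * (\<i> * of_int n * complex_of_real a))"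
      by (simp add: z_def exp_of_nat_mult)
    also have "of_nat N * (\<i> * of_int n * complex_of_real a) = 2 * of_int n * complex_of_real (real N * a) * \<i> / 2"
      by (simp add: algebra_simps)
    also have "\<dots> = 2 * of_int n * pi * \<i>" unfolding Na by simp
    also have "exp \<dots> = 1" by (rule exp_integer_2pi) simp
    finally show ?thesis .
  qed
  have z1: "z \<noteq> 1"
  proof
    assume "z = 1"
    then obtain m :: int where m: "Im (\<i> * of_int n * complex_of_real a) = of_int (2 * m) * pi"
      unfolding z_def exp_eq_1 by blast
    then have "of_int n * a = of_int (2 * m) * pi" by simp
    then have "of_int n * (real N * a) = real N * (of_int (2 * m) * pi)" by (simp add: algebra_simps)
    then have "of_int n * (2 * pi) = real N * (of_int (2 * m) * pi)" unfolding Na .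
    then have "real_of_int n = of_int m * real N" by (simp add: algebra_simps)
    then have "n = m * int N" by (metis of_int_eq_iff of_int_mult of_int_of_nat_eq)
    with n0 nb show False
      by (cases "m = 0") (auto simp: N_def abs_mult, smt (verit) mult_le_cancel_right1 of_nat_0_le_iff)
  qed
  have "(\<Sum>l\<in>{-2*int K..2*int K}. exp (\<i> * of_int n * complex_of_real (grid_pt K l)))
      = (\<Sum>j<N. w * z ^ j)"
    unfolding img by (simp add: sum.reindex[OF inj] term_eq)
  also have "\<dots> = w * ((z ^ N - 1) / (z - 1))"
    by (simp add: sum_distrib_left[symmetric] geometric_sum[OF z1])
  also have "\<dots> = 0" by (simp add: zN)
  finally show ?thesis .
qed

lemma root_sum_gen:
  fixes n :: int
  assumes nb: "\<bar>n\<bar> < 4 * int K + 1"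
  shows "(\<Sum>l\<in>{-2*int K..2*int K}. exp (\<i> * of_int n * complex_of_real (grid_pt K l))) = (if n = 0 then of_nat (4 * K + 1) else 0)"
proof (cases "n = 0")
  case True
  have "card {-2*int K..2*int K} = 4 * K + 1" by simp
  then show ?thesis using True by simp
next
  case False
  then show ?thesis using root_sum[OF False nb] by simp
qed

lemma quad:
  fixes m :: int
  assumes mb: "\<bar>m\<bar> + 2 * int K < 4 * int K + 1"
  shows "(\<Sum>l\<in>{-2*int K..2*int K}. exp (\<i> * of_int m * complex_of_real (grid_pt K l)) * complex_of_real (pK K (grid_pt K l - \<psi>)))
     = of_real (real (4 * K + 1) * real (card {j\<in>{-int K..int K}. -m-j \<in> {-int K..int K}}) / (2 * real K + 1))
       * exp (\<i> * of_int m * complex_of_real \<psi>)"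
proof -
  define J where "J = {-int K..int K}"
  define L where "L = {-2*int K..2*int K}"
  have finJ: "finite J" by (simp add: J_def)
  define th where "th = grid_pt K"
  define N where "N = 4 * K + 1"
  define E where "E = (\<lambda>(x::real) (k::int). exp (\<i> * of_int k * complex_of_real x))"
  have key: "exp (\<i> * of_int m * complex_of_real (th l)) * (E (th l - \<psi>) k * E (th l - \<psi>) j)
      = exp (- (\<i> * of_int (j + k) * complex_of_real \<psi>)) * exp (\<i> * of_int (m + j + k) * complex_of_real (th l))" for l j k
    unfolding E_def mult_exp_exp by (rule arg_cong[where f=exp]) (simp add: algebra_simps)
  have rs: "(\<Sum>l\<in>L. exp (\<i> * of_int (m + j + k) * complex_of_real (th l))) = (if k = -m-j then of_nat N else 0)"
    if "j \<in> J" "k \<in> J" for j k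
  proof -
    have "\<bar>m + j + k\<bar> < 4 * int K + 1" using that mb by (auto simp: J_def)
    from root_sum_gen[OF this] show ?thesis unfolding L_def th_def N_def by auto
  qed
  have "(\<Sum>l\<in>L. exp (\<i> * of_int m * complex_of_real (th l)) * complex_of_real (pK K (th l - \<psi>)))
      = (\<Sum>l\<in>L. \<Sum>j\<in>J. \<Sum>k\<in>J. exp (\<i> * of_int m * complex_of_real (th l)) * (E (th l - \<psi>) k * E (th l - \<psi>) j)) / (2 * of_nat K + 1)"
    unfolding pK_complex E_def J_def
    by (simp add: sum_divide_distrib sum_distrib_left sum_distrib_right mult.assoc)
  also have "\<dots> = (\<Sum>j\<in>J. \<Sum>k\<in>J. exp (- (\<i> * of_int (j + k) * complex_of_real \<psi>)) * (\<Sum>l\<in>L. exp (\<i> * of_int (m + j + k) * complex_of_real (th l)))) / (2 * of_nat K + 1)"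
    unfolding key sum_distrib_left
    by (subst sum.swap, subst (2) sum.swap, simp)
  also have "\<dots> = (\<Sum>j\<in>J. \<Sum>k\<in>J. if k = -m-j then of_nat N * exp (\<i> * of_int m * complex_of_real \<psi>) else 0) / (2 * of_nat K + 1)"
  proof (intro arg_cong2[where f="(/)"] sum.cong refl)
    fix j k assume jk: "j \<in> J" "k \<in> J"
    show "exp (- (\<i> * of_int (j + k) * complex_of_real \<psi>)) * (\<Sum>l\<in>L. exp (\<i> * of_int (m + j + k) * complex_of_real (th l)))
      = (if k = -m-j then of_nat N * exp (\<i> * of_int m * complex_of_real \<psi>) else 0)"
      by (simp only: rs[OF jk]) (cases "k = -m-j"; simp)
  qed
  also have "\<dots> = (\<Sum>j\<in>J. if -m-j \<in> J then of_nat N * exp (\<i> * of_int m * complex_of_real \<psi>) else 0) / (2 * of_nat K + 1)"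
    by (simp add: sum.delta' J_def)
  also have "\<dots> = of_nat (card {j\<in>J. -m-j \<in> J}) * of_nat N * exp (\<i> * of_int m * complex_of_real \<psi>) / (2 * of_nat K + 1)"
    by (simp add: sum.inter_filter[symmetric, OF finJ])
  finally show ?thesis unfolding J_def L_def th_def N_def
    by (simp add: field_simps)
qed

lemma quad0: "(\<Sum>l\<in>{-2*int K..2*int K}. pK K (grid_pt K l - \<psi>)) = real (4 * K + 1)"
proof -
  have d: "2 * real K + 1 > 0" by (simp add: add_nonneg_pos)
  have c: "{j\<in>{-int K..int K}. -0-j \<in> {-int K..int K}} = {-int K..int K}" by auto
  have "card {-int K..int K} = 2 * K + 1" by simp
  then have r: "real (4 * K + 1) * real (card {j\<in>{-int K..int K}. -0-j \<in> {-int K..int K}}) / (2 * real K + 1) = real (4 * K + 1)"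
    unfolding c using d by (simp add: field_simps)
  have "complex_of_real (\<Sum>l\<in>{-2*int K..2*int K}. pK K (grid_pt K l - \<psi>)) = complex_of_real (real (4 * K + 1))"
    using quad[of 0 K \<psi>] unfolding r by (simp only: of_int_0 mult_zero_right mult_zero_left exp_zero mult_1_left mult_1_right of_real_sum)
  then show ?thesis using of_real_eq_iff by blast
qed

lemma quad2:
  assumes "K \<ge> 1"
  shows "\<exists>C. \<forall>\<psi>. (\<Sum>l\<in>{-2*int K..2*int K}. cos (grid_pt K l) * sin (grid_pt K l) * pK K (grid_pt K l - \<psi>)) = C * (cos \<psi> * sin \<psi>)"
proof -
  define c where "c = real (4 * K + 1) * real (card {j\<in>{-int K..int K}. -2-j \<in> {-int K..int K}}) / (2 * real K + 1)"
  have "\<bar>2\<bar> + 2 * int K < 4 * int K + 1" using assms by simp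
  note q = quad[OF this]
  have "(\<Sum>l\<in>{-2*int K..2*int K}. cos (grid_pt K l) * sin (grid_pt K l) * pK K (grid_pt K l - \<psi>)) = c * (cos \<psi> * sin \<psi>)" for \<psi>
  proof -
    have "Im (\<Sum>l\<in>{-2*int K..2*int K}. exp (\<i> * of_int 2 * complex_of_real (grid_pt K l)) * complex_of_real (pK K (grid_pt K l - \<psi>)))
       = Im (of_real c * exp (\<i> * of_int 2 * complex_of_real \<psi>))"
      using q[of \<psi>] unfolding c_def by simp
    then have "(\<Sum>l\<in>{-2*int K..2*int K}. sin (2 * grid_pt K l) * pK K (grid_pt K l - \<psi>)) = c * sin (2 * \<psi>)"
      by (simp add: Im_exp)
    then have "2 * (\<Sum>l\<in>{-2*int K..2*int K}. cos (grid_pt K l) * sin (grid_pt K l) * pK K (grid_pt K l - \<psi>)) = 2 * (c * (cos \<psi> * sin \<psi>))"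
      unfolding sin_double sum_distrib_left by (simp add: algebra_simps)
    then show ?thesis by simp
  qed
  then show ?thesis by blast
qed

lemma pK_meas[measurable]: "(\<lambda>x. pK K (a - x)) \<in> borel_measurable borel"
proof -
  have "continuous_on UNIV (\<lambda>x. pK K (a - x))"
    unfolding pK_Dk Dk_def by (intro continuous_intros) auto
  then show ?thesis by (rule borel_measurable_continuous_onI)
qed

lemma pK_meas'[measurable]: "pK K \<in> borel_measurable borel"
  using continuous_pK by (rule borel_measurable_continuous_onI)

lemma per_ext_decomp:
  fixes r :: "real \<Rightarrow> real"
  assumes r: "\<And>x. r x = indicator {-pi..<pi} x * \<rho> x"
    and x: "-2*pi < x" "x < 2*pi"
  shows "per_ext \<rho> x = (\<Sum>n\<in>{-1,0,1::int}. r (x - 2 * pi * of_int n))"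
proof -
  define n0 where "n0 = \<lfloor>(x + pi) / (2 * pi)\<rfloor>"
  have iff: "x - 2 * pi * of_int n \<in> {-pi..<pi} \<longleftrightarrow> n = n0" for n
  proof
    assume a: "x - 2 * pi * of_int n \<in> {-pi..<pi}"
    have "of_int n \<le> (x + pi) / (2 * pi)" "(x + pi) / (2 * pi) < of_int n + 1"
      using a pi_gt_zero by (auto simp: field_simps)
    then show "n = n0" unfolding n0_def by (metis floor_unique)
  next
    assume "n = n0"
    have "of_int n0 \<le> (x + pi) / (2 * pi)" "(x + pi) / (2 * pi) < of_int n0 + 1"
      unfolding n0_def by linarith+
    then show "x - 2 * pi * of_int n \<in> {-pi..<pi}"
      using \<open>n = n0\<close> pi_gt_zero by (auto simp: field_simps)
  qed
  have "n0 \<in> {-1,0,1}"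
  proof -
    have "-1 < (x + pi) / (2 * pi)" "(x + pi) / (2 * pi) < 2" using x pi_gt_zero by (auto simp: field_simps)
    then have "-1 \<le> n0" "n0 \<le> 1" unfolding n0_def by linarith+
    then show ?thesis by auto
  qed
  have "(\<Sum>n\<in>{-1,0,1::int}. r (x - 2 * pi * of_int n)) = (\<Sum>n\<in>{-1,0,1::int}. if n = n0 then \<rho> (x - 2 * pi * of_int n0) else 0)"
  proof (intro sum.cong refl)
    fix n :: int
    show "r (x - 2 * pi * of_int n) = (if n = n0 then \<rho> (x - 2 * pi * of_int n0) else 0)"
    proof (cases "n = n0")
      case True
      then show ?thesis using iff[of n] by (simp add: r indicator_def)
    next
      case False
      then show ?thesis using iff[of n] by (simp add: r indicator_def)
    qed
  qed
  also have "\<dots> = \<rho> (x - 2 * pi * of_int n0)"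
    using \<open>n0 \<in> {-1,0,1}\<close> by (subst sum.delta) simp_all
  also have "\<dots> = per_ext \<rho> x" by (simp add: per_ext_def n0_def)
  finally show ?thesis by simp
qed

lemma ind_sum:
  assumes "-2*pi < y" "y < 2*pi" "y \<noteq> pi" "y \<noteq> -pi"
  shows "(\<Sum>n\<in>{-1,0,1::int}. indicator {-pi..pi} (y - 2 * pi * of_int n) :: real) = 1"
proof -
  have s: "(\<Sum>n\<in>{-1,0,1::int}. indicator {-pi..pi} (y - 2 * pi * of_int n) :: real)
     = indicator {-pi..pi} (y + 2 * pi) + indicator {-pi..pi} y + indicator {-pi..pi} (y - 2 * pi)"
    by simp
  have p: "pi > 0" by (rule pi_gt_zero)
  consider "y < -pi" | "-pi < y \<and> y < pi" | "pi < y" using assms by linarith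
  then show ?thesis
  proof cases
    case 1
    then have "indicator {-pi..pi} (y + 2 * pi) = (1::real)" "indicator {-pi..pi} y = (0::real)" "indicator {-pi..pi} (y - 2 * pi) = (0::real)"
      using assms p by (simp_all add: indicator_def)
    then show ?thesis unfolding s by simp
  next
    case 2
    then have "indicator {-pi..pi} (y + 2 * pi) = (0::real)" "indicator {-pi..pi} y = (1::real)" "indicator {-pi..pi} (y - 2 * pi) = (0::real)"
      using assms p by (simp_all add: indicator_def)
    then show ?thesis unfolding s by simp
  next
    case 3
    then have "indicator {-pi..pi} (y + 2 * pi) = (0::real)" "indicator {-pi..pi} y = (0::real)" "indicator {-pi..pi} (y - 2 * pi) = (1::real)"
      using assms p by (simp_all add: indicator_def)
    then show ?thesis unfolding s by simp
  qed
qed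

lemma rhoK_conv:
  assumes int: "set_integrable lborel {-pi..pi} \<rho>" and th: "-pi < \<theta>" "\<theta> < pi"
  shows "rhoK \<rho> K \<theta> = (1/(2*pi)) * (\<integral>\<psi>. indicator {-pi..pi} \<psi> * \<rho> \<psi> * pK K (\<theta> - \<psi>) \<partial>lborel)"
proof -
  define q where "q x = indicator {-pi..pi} x * \<rho> x" for x
  define r where "r x = indicator {-pi..<pi} x * \<rho> x" for x
  have qint: "integrable lborel q" using int unfolding set_integrable_def q_def by simp
  have r_eq: "r x = indicator {-pi..<pi} x * q x" for x
    by (auto simp: r_def q_def indicator_def)
  have rint: "integrable lborel r"
    unfolding r_eq using integrable_real_mult_indicator[OF _ qint, of "{-pi..<pi}"] by (simp add: mult.commute)
  have [measurable]: "r \<in> borel_measurable lborel" using rint by auto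
  have rmeas[measurable]: "r \<in> borel_measurable borel" using rint by (simp add: borel_measurable_integrable)
  define G where "G n x = indicator {-pi..pi} (\<theta> - 2 * pi * of_int n - x) * (r x * pK K (\<theta> - x))" for n :: int and x
  have Gint: "integrable lborel (G n)" for n
  proof (rule Bochner_Integration.integrable_bound[where f="\<lambda>x. (2 * real K + 1) * r x"])
    show "integrable lborel (\<lambda>x. (2 * real K + 1) * r x)" using rint by simp
    show "G n \<in> borel_measurable lborel" unfolding G_def by measurable
    show "AE x in lborel. norm (G n x) \<le> norm ((2 * real K + 1) * r x)"
    proof (rule AE_I2)
      fix x
      have "\<bar>pK K (\<theta> - x)\<bar> \<le> 2 * real K + 1" using pK_bound pK_nonneg by simp
      then have "\<bar>r x\<bar> * \<bar>pK K (\<theta> - x)\<bar> \<le> \<bar>r x\<bar> * (2 * real K + 1)" by (simp add: mult_left_mono)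
      then show "norm (G n x) \<le> norm ((2 * real K + 1) * r x)"
        unfolding G_def by (auto simp: indicator_def abs_mult mult.commute)
    qed
  qed
  define F where "F n x = indicator {-pi..pi} x * (r (\<theta> - x - 2 * pi * of_int n) * pK K x)" for n :: int and x
  have FG: "(\<lambda>x. F n (\<theta> - 2 * pi * of_int n + -1 * x)) = G n" for n
  proof
    fix x
    have "pK K (\<theta> - 2 * pi * of_int n - x) = pK K (\<theta> - x + 2 * pi * of_int (-n))"
      by (simp add: algebra_simps)
    also have "\<dots> = pK K (\<theta> - x)" by (rule pK_periodic)
    finally have c: "pK K (\<theta> - 2 * pi * of_int n - x) = pK K (\<theta> - x)" .
    have a1: "\<theta> - (\<theta> - 2 * pi * of_int n - x) - 2 * pi * of_int n = x" by simp
    have a2: "\<theta> - 2 * pi * of_int n + -1 * x = \<theta> - 2 * pi * of_int n - x" by simp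
    show "F n (\<theta> - 2 * pi * of_int n + -1 * x) = G n x" unfolding F_def G_def a2 a1 c by (simp only: mult_ac)
  qed
  have Fint: "integrable lborel (F n)" for n
  proof -
    have "integrable lborel (\<lambda>x. F n (\<theta> - 2 * pi * of_int n + -1 * x)) = integrable lborel (F n)"
      by (rule lborel_integrable_real_affine_iff) simp
    then show ?thesis unfolding FG using Gint[of n] by simp
  qed
  have FGi: "integral\<^sup>L lborel (F n) = integral\<^sup>L lborel (G n)" for n
  proof -
    have "integral\<^sup>L lborel (F n) = \<bar>-1\<bar> *\<^sub>R integral\<^sup>L lborel (\<lambda>x. F n (\<theta> - 2 * pi * of_int n + -1 * x))"
      by (rule lborel_integral_real_affine) simp
    then show ?thesis unfolding FG by simp
  qed
  have step0: "rhoK \<rho> K \<theta> = (1/(2*pi)) * (\<integral>\<phi>. indicator {-pi..pi} \<phi> * (per_ext \<rho> (\<theta> - \<phi>) * pK K \<phi>) \<partial>lborel)"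
  proof -
    have e: "(- (ereal pi)) = ereal (-pi)" by simp
    show ?thesis unfolding rhoK_def e
      by (subst interval_integral_Icc) (auto simp: set_lebesgue_integral_def)
  qed
  have step1: "(\<integral>\<phi>. indicator {-pi..pi} \<phi> * (per_ext \<rho> (\<theta> - \<phi>) * pK K \<phi>) \<partial>lborel)
      = (\<integral>\<phi>. (\<Sum>n\<in>{-1,0,1::int}. F n \<phi>) \<partial>lborel)"
  proof (rule Bochner_Integration.integral_cong[OF refl])
    fix \<phi>
    show "indicator {-pi..pi} \<phi> * (per_ext \<rho> (\<theta> - \<phi>) * pK K \<phi>) = (\<Sum>n\<in>{-1,0,1::int}. F n \<phi>)"
    proof (cases "\<phi> \<in> {-pi..pi}")
      case True
      then have "-2*pi < \<theta> - \<phi>" "\<theta> - \<phi> < 2*pi" using th by auto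
      from per_ext_decomp[OF r_def this] show ?thesis
        unfolding F_def by (simp only: sum_distrib_left sum_distrib_right)
    qed (simp add: F_def)
  qed
  also have "\<dots> = (\<Sum>n\<in>{-1,0,1::int}. integral\<^sup>L lborel (F n))"
    by (rule Bochner_Integration.integral_sum) (rule Fint)
  also have "\<dots> = (\<Sum>n\<in>{-1,0,1::int}. integral\<^sup>L lborel (G n))"
    by (simp only: FGi)
  also have "\<dots> = (\<integral>x. (\<Sum>n\<in>{-1,0,1::int}. G n x) \<partial>lborel)"
    by (rule Bochner_Integration.integral_sum[symmetric]) (rule Gint)
  also have "\<dots> = (\<integral>x. q x * pK K (\<theta> - x) \<partial>lborel)"
  proof (rule integral_discrete_difference[where X="{\<theta> - pi, \<theta> + pi, pi}"])
    fix x assume x: "x \<notin> {\<theta> - pi, \<theta> + pi, pi}"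
    have "(\<Sum>n\<in>{-1,0,1::int}. G n x) = (\<Sum>n\<in>{-1,0,1::int}. indicator {-pi..pi} (\<theta> - x - 2 * pi * of_int n)) * (r x * pK K (\<theta> - x))"
      unfolding G_def sum_distrib_right by (intro sum.cong refl) (simp add: algebra_simps)
    also have "\<dots> = q x * pK K (\<theta> - x)"
    proof (cases "x \<in> {-pi..<pi}")
      case True
      then have "-2*pi < \<theta> - x" "\<theta> - x < 2*pi" "\<theta> - x \<noteq> pi" "\<theta> - x \<noteq> -pi" using th x by auto
      from ind_sum[OF this] show ?thesis using r_eq True by simp
    next
      case False
      then have "r x = 0" "q x = 0" using x by (auto simp: r_def q_def indicator_def)
      then show ?thesis by simp
    qed
    finally show "(\<Sum>n\<in>{-1,0,1::int}. G n x) = q x * pK K (\<theta> - x)" .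
  qed auto
  finally show ?thesis unfolding step0 q_def by simp
qed

lemma sin_lower:
  assumes "0 < a" "a \<le> pi/2" "a \<le> t" "t \<le> pi - a"
  shows "sin a \<le> sin t"
proof (cases "t \<le> pi/2")
  case True
  then show ?thesis using assms by (intro sin_monotone_2pi_le) auto
next
  case False
  have "sin a \<le> sin (pi - t)" using assms False by (intro sin_monotone_2pi_le) auto
  then show ?thesis by simp
qed

lemma sin_sq_lower:
  assumes "0 < d" "d \<le> pi" "d \<le> \<bar>x\<bar>" "\<bar>x\<bar> \<le> 2*pi - d"
  shows "(sin (d/2))^2 \<le> (sin (x/2))^2"
proof -
  have "sin (d/2) \<le> sin (\<bar>x\<bar>/2)" using assms by (intro sin_lower) auto
  moreover have "0 \<le> sin (d/2)" using assms by (intro sin_ge_zero) auto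
  moreover have "(sin (\<bar>x\<bar>/2))^2 = (sin (x/2))^2"
    by (cases "x \<ge> 0") (auto simp: power2_eq_square)
  ultimately show ?thesis by (metis power_mono)
qed

lemma pK_far:
  assumes "c > 0" "c \<le> (sin (x/2))^2"
  shows "pK K x \<le> 1 / (c * (2 * real K + 1))"
proof -
  have "(Dk K x * sin (x/2))^2 \<le> 1" unfolding Dk_sin
    using sin_cos_squared_add[of "(2 * real K + 1) * x / 2"] zero_le_power2[of "cos ((2 * real K + 1) * x / 2)"] by linarith
  then have "(Dk K x)^2 * (sin (x/2))^2 \<le> 1" by (simp add: power_mult_distrib)
  moreover have "(Dk K x)^2 * c \<le> (Dk K x)^2 * (sin (x/2))^2" using assms by (simp add: mult_left_mono)
  ultimately have "(Dk K x)^2 * c \<le> 1" by linarith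
  then have "(Dk K x)^2 \<le> 1 / c" using assms by (simp add: field_simps)
  then have "(Dk K x)^2 / (2*real K+1) \<le> (1/c) / (2*real K+1)"
    by (rule divide_right_mono) simp
  then show ?thesis unfolding pK_Dk by simp
qed

lemma grid_in:
  assumes "l \<in> {-2*int K..2*int K}"
  shows "-pi < grid_pt K l" "grid_pt K l < pi"
proof -
  have "\<bar>real_of_int l\<bar> \<le> 2 * real K" using assms by auto
  then have "\<bar>real_of_int l\<bar> * (2 * pi) \<le> 2 * real K * (2 * pi)" using pi_gt_zero
    by (intro mult_right_mono) auto
  also have "\<dots> < pi * (4 * real K + 1)" using pi_gt_zero by (simp add: algebra_simps)
  finally have "\<bar>real_of_int l\<bar> * (2 * pi) < pi * (4 * real K + 1)" .
  then have "\<bar>grid_pt K l\<bar> < pi" unfolding grid_pt_def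
    by (simp add: abs_mult abs_divide field_simps)
  then show "-pi < grid_pt K l" "grid_pt K l < pi" by auto
qed

lemma G_lim:
  fixes f :: "real \<Rightarrow> real"
  assumes cont: "continuous_on {-pi..pi} f" and M: "\<And>x. x \<in> {-pi..pi} \<Longrightarrow> \<bar>f x\<bar> \<le> M"
    and psi: "-pi < \<psi>" "\<psi> < pi"
  shows "(\<lambda>K. (1 / real (4 * K + 1)) * (\<Sum>l\<in>{-2*int K..2*int K}. f (grid_pt K l) * pK K (grid_pt K l - \<psi>))) \<longlonglongrightarrow> f \<psi>"
proof (rule LIMSEQ_I)
  fix e :: real assume e: "e > 0"
  have psiS: "\<psi> \<in> {-pi..pi}" using psi by auto
  from cont psiS e obtain d where d: "d > 0" and dd: "\<And>y. y \<in> {-pi..pi} \<Longrightarrow> dist y \<psi> < d \<Longrightarrow> dist (f y) (f \<psi>) < e/2"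
    unfolding continuous_on_iff by (metis half_gt_zero)
  define \<delta> where "\<delta> = min d (pi - \<bar>\<psi>\<bar>)"
  have dpos: "\<delta> > 0" using d psi by (auto simp: \<delta>_def)
  have dle: "\<delta> \<le> pi" using psi by (auto simp: \<delta>_def)
  define c where "c = (sin (\<delta>/2))^2"
  have cpos: "c > 0" unfolding c_def using dpos dle by (intro zero_less_power sin_gt_zero) auto
  have M0: "M \<ge> 0" using M[OF psiS] by linarith
  have far: "pK K (y - \<psi>) \<le> 1 / (c * (2 * real K + 1))" if "y \<in> {-pi..pi}" "\<delta> \<le> \<bar>y - \<psi>\<bar>" for K y
  proof (rule pK_far[OF cpos])
    have "\<bar>y - \<psi>\<bar> \<le> 2*pi - \<delta>" using that psi by (auto simp: \<delta>_def)
    then show "c \<le> (sin ((y - \<psi>)/2))^2" unfolding c_def using dpos dle that by (intro sin_sq_lower) auto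
  qed
  define B where "B K = 2 * M / (c * (2 * real K + 1))" for K
  have termb: "\<bar>f (grid_pt K l) - f \<psi>\<bar> * pK K (grid_pt K l - \<psi>) \<le> e/2 * pK K (grid_pt K l - \<psi>) + B K"
    if l: "l \<in> {-2*int K..2*int K}" for K l
  proof -
    define y where "y = grid_pt K l"
    have yS: "y \<in> {-pi..pi}" using grid_in[OF l] by (auto simp: y_def)
    have p0: "pK K (y - \<psi>) \<ge> 0" by (rule pK_nonneg)
    have B0: "B K \<ge> 0" using M0 cpos by (simp add: B_def)
    have "\<bar>f y - f \<psi>\<bar> * pK K (y - \<psi>) \<le> e/2 * pK K (y - \<psi>) + B K"
    proof (cases "\<bar>y - \<psi>\<bar> < \<delta>")
      case True
      then have "\<bar>f y - f \<psi>\<bar> < e/2" using dd[OF yS] by (auto simp: dist_real_def \<delta>_def)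
      then have "\<bar>f y - f \<psi>\<bar> * pK K (y - \<psi>) \<le> e/2 * pK K (y - \<psi>)" by (rule mult_right_mono[OF less_imp_le p0])
      then show ?thesis using B0 by linarith
    next
      case False
      have "\<bar>f y - f \<psi>\<bar> \<le> 2 * M" using M[OF yS] M[OF psiS] by linarith
      moreover have "pK K (y - \<psi>) \<le> 1 / (c * (2 * real K + 1))" using far[OF yS] False by simp
      ultimately have "\<bar>f y - f \<psi>\<bar> * pK K (y - \<psi>) \<le> 2 * M * (1 / (c * (2 * real K + 1)))"
        using p0 M0 by (intro mult_mono) auto
      then have "\<bar>f y - f \<psi>\<bar> * pK K (y - \<psi>) \<le> B K" by (simp add: B_def)
      moreover have "0 \<le> e/2 * pK K (y - \<psi>)" using e p0 by simp
      ultimately show ?thesis by linarith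
    qed
    then show ?thesis by (simp add: y_def)
  qed
  have bound: "\<bar>(1 / real (4 * K + 1)) * (\<Sum>l\<in>{-2*int K..2*int K}. f (grid_pt K l) * pK K (grid_pt K l - \<psi>)) - f \<psi>\<bar> \<le> e/2 + B K" for K
  proof -
    define N where "N = real (4 * K + 1)"
    have Npos: "N > 0" by (simp add: N_def)
    have q0: "(\<Sum>l\<in>{-2*int K..2*int K}. pK K (grid_pt K l - \<psi>)) = N" using quad0[of K \<psi>] by (simp add: N_def)
    have diffeq: "(1 / N) * (\<Sum>l\<in>{-2*int K..2*int K}. f (grid_pt K l) * pK K (grid_pt K l - \<psi>)) - f \<psi>
        = (1 / N) * (\<Sum>l\<in>{-2*int K..2*int K}. (f (grid_pt K l) - f \<psi>) * pK K (grid_pt K l - \<psi>))"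
    proof -
      have e1: "(\<Sum>l\<in>{-2*int K..2*int K}. f \<psi> * pK K (grid_pt K l - \<psi>)) = f \<psi> * N"
        unfolding sum_distrib_left[symmetric] q0 ..
      let ?A = "(\<Sum>l\<in>{-2*int K..2*int K}. f (grid_pt K l) * pK K (grid_pt K l - \<psi>))"
      let ?B = "(\<Sum>l\<in>{-2*int K..2*int K}. f \<psi> * pK K (grid_pt K l - \<psi>))"
      have h: "f \<psi> = (1 / N) * ?B"
        unfolding e1 using Npos by simp
      have "(1 / N) * ?A - f \<psi> = (1 / N) * ?A - (1 / N) * ?B"
        using h by (rule arg_cong)
      also have "\<dots> = (1 / N) * (?A - ?B)" by (rule right_diff_distrib[symmetric])
      also have "\<dots> = (1 / N) * (\<Sum>l\<in>{-2*int K..2*int K}. (f (grid_pt K l) - f \<psi>) * pK K (grid_pt K l - \<psi>))"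
        by (simp only: sum_subtractf[symmetric] left_diff_distrib)
      finally show ?thesis .
    qed
    have "\<bar>(1 / N) * (\<Sum>l\<in>{-2*int K..2*int K}. f (grid_pt K l) * pK K (grid_pt K l - \<psi>)) - f \<psi>\<bar>
        \<le> (1 / N) * (\<Sum>l\<in>{-2*int K..2*int K}. \<bar>f (grid_pt K l) - f \<psi>\<bar> * pK K (grid_pt K l - \<psi>))"
    proof -
      have "\<bar>\<Sum>l\<in>{-2*int K..2*int K}. (f (grid_pt K l) - f \<psi>) * pK K (grid_pt K l - \<psi>)\<bar>
          \<le> (\<Sum>l\<in>{-2*int K..2*int K}. \<bar>(f (grid_pt K l) - f \<psi>) * pK K (grid_pt K l - \<psi>)\<bar>)"
        by (rule sum_abs)
      also have "\<dots> = (\<Sum>l\<in>{-2*int K..2*int K}. \<bar>f (grid_pt K l) - f \<psi>\<bar> * pK K (grid_pt K l - \<psi>))"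
        by (simp add: abs_mult pK_nonneg)
      finally have "(1 / N) * \<bar>\<Sum>l\<in>{-2*int K..2*int K}. (f (grid_pt K l) - f \<psi>) * pK K (grid_pt K l - \<psi>)\<bar>
          \<le> (1 / N) * (\<Sum>l\<in>{-2*int K..2*int K}. \<bar>f (grid_pt K l) - f \<psi>\<bar> * pK K (grid_pt K l - \<psi>))"
        using Npos by (intro mult_left_mono) auto
      then show ?thesis unfolding diffeq using Npos by (simp add: abs_mult)
    qed
    also have "\<dots> \<le> (1 / N) * (\<Sum>l\<in>{-2*int K..2*int K}. e/2 * pK K (grid_pt K l - \<psi>) + B K)"
      using Npos by (intro mult_left_mono sum_mono termb) auto
    also have "\<dots> = e/2 + B K"
    proof -
      have "(\<Sum>l\<in>{-2*int K..2*int K}. e/2 * pK K (grid_pt K l - \<psi>) + B K) = e/2 * N + N * B K"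
        unfolding sum.distrib sum_distrib_left[symmetric] q0 by (simp add: N_def)
      then show ?thesis using Npos by (simp add: field_simps)
    qed
    finally show ?thesis unfolding N_def .
  qed
  obtain n0 :: nat where n0: "4 * M / (c * e) < real n0" using reals_Archimedean2 by blast
  show "\<exists>no. \<forall>n\<ge>no. norm ((1 / real (4 * n + 1)) * (\<Sum>l\<in>{-2*int n..2*int n}. f (grid_pt n l) * pK n (grid_pt n l - \<psi>)) - f \<psi>) < e"
  proof (intro exI allI impI)
    fix n assume "n \<ge> n0"
    then have "4 * M / (c * e) < 2 * real n + 1" using n0 by linarith
    then have "4 * M < (2 * real n + 1) * (c * e)" using cpos e by (simp add: field_simps)
    then have "2 * M < e/2 * (c * (2 * real n + 1))" by (simp add: algebra_simps)
    moreover have pos: "c * (2 * real n + 1) > 0" using cpos by (simp add: add_nonneg_pos)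
    ultimately have "B n < e/2" unfolding B_def by (simp add: pos_divide_less_eq[OF pos])
    then show "norm ((1 / real (4 * n + 1)) * (\<Sum>l\<in>{-2*int n..2*int n}. f (grid_pt n l) * pK n (grid_pt n l - \<psi>)) - f \<psi>) < e"
      using bound[of n] by simp
  qed
qed

definition gw :: "(real \<Rightarrow> real) \<Rightarrow> nat \<Rightarrow> real \<Rightarrow> real" where
  "gw \<rho> K a = (\<Sum>l\<in>{-2 * int K..2 * int K}.
        if a = grid_pt K l then 2 * pi / (4 * real K + 1) * rhoK \<rho> K (grid_pt K l) else 0)"

lemma nuK_gw: "nuK \<rho> K = point_measure UNIV (\<lambda>a. ennreal (gw \<rho> K a))"
  unfolding nuK_def gw_def ..

lemma gw_nonneg:
  assumes A: "\<And>l. l \<in> {-2 * int K..2 * int K} \<Longrightarrow> rhoK \<rho> K (grid_pt K l) \<ge> 0"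
  shows "gw \<rho> K a \<ge> 0"
  unfolding gw_def using A by (intro sum_nonneg) auto

lemma gw_zero: assumes "a \<notin> grid_pt K ` {-2 * int K..2 * int K}" shows "gw \<rho> K a = 0"
  unfolding gw_def by (rule sum.neutral) (use assms in auto)

lemma gw_supp: "gw \<rho> K a \<noteq> 0 \<Longrightarrow> a \<in> grid_pt K ` {-2 * int K..2 * int K}"
  using gw_zero by blast

lemma emeas_nu:
  assumes A: "\<And>l. l \<in> {-2 * int K..2 * int K} \<Longrightarrow> rhoK \<rho> K (grid_pt K l) \<ge> 0"
  shows "emeasure (nuK \<rho> K) X = ennreal (\<Sum>a\<in>grid_pt K ` {-2 * int K..2 * int K} \<inter> X. gw \<rho> K a)"
proof -
  define S where "S = grid_pt K ` {-2 * int K..2 * int K}"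
  have finS: "finite S" by (simp add: S_def)
  have gnn: "gw \<rho> K a \<ge> 0" for a by (rule gw_nonneg) (rule A)
  have pos: "0 < gw \<rho> K a" if "ennreal (gw \<rho> K a) \<noteq> 0" for a
  proof (rule ccontr)
    assume "\<not> 0 < gw \<rho> K a"
    then have "gw \<rho> K a = 0" using gnn[of a] by simp
    then show False using that by simp
  qed
  have sub: "{a \<in> X. 0 < ennreal (gw \<rho> K a)} \<subseteq> S \<inter> X"
    using gw_supp[of \<rho> K] by (force simp: S_def)
  have sub': "{a \<in> X. 0 < gw \<rho> K a} \<subseteq> S"
    using gw_supp[of \<rho> K] by (force simp: S_def)
  have "emeasure (nuK \<rho> K) X = (\<Sum>a | a \<in> X \<and> 0 < ennreal (gw \<rho> K a). ennreal (gw \<rho> K a))"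
    unfolding nuK_gw by (rule emeasure_point_measure) (auto intro: finite_subset[OF sub'] simp: finS)
  also have "\<dots> = (\<Sum>a\<in>S \<inter> X. ennreal (gw \<rho> K a))"
  proof (rule sum.mono_neutral_left)
    show "finite (S \<inter> X)" using finS by simp
    show "{a. a \<in> X \<and> 0 < ennreal (gw \<rho> K a)} \<subseteq> S \<inter> X" using sub by simp
    show "\<forall>i\<in>S \<inter> X - {a. a \<in> X \<and> 0 < ennreal (gw \<rho> K a)}. ennreal (gw \<rho> K i) = 0"
      using pos by (auto simp: not_less)
  qed
  also have "\<dots> = ennreal (\<Sum>a\<in>S \<inter> X. gw \<rho> K a)"
    using gnn by (intro sum_ennreal) auto
  finally show ?thesis unfolding S_def .
qed

lemma integ_nu:
  fixes h :: "real \<Rightarrow> real"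
  assumes A: "\<And>l. l \<in> {-2 * int K..2 * int K} \<Longrightarrow> rhoK \<rho> K (grid_pt K l) \<ge> 0"
  shows "(\<integral>a. h a \<partial>nuK \<rho> K) = (\<Sum>a\<in>grid_pt K ` {-2 * int K..2 * int K}. gw \<rho> K a * h a)"
proof -
  define S where "S = grid_pt K ` {-2 * int K..2 * int K}"
  have finS: "finite S" by (simp add: S_def)
  have gnn: "gw \<rho> K a \<ge> 0" for a by (rule gw_nonneg) (rule A)
  have "(\<integral>a. h a \<partial>nuK \<rho> K) = (\<integral>a. gw \<rho> K a *\<^sub>R h a \<partial>count_space UNIV)"
    unfolding nuK_gw point_measure_def
    by (rule integral_density) (auto intro!: AE_I2 simp: gnn)
  also have "\<dots> = (\<integral>a. gw \<rho> K a * h a \<partial>count_space UNIV)" by simp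
  also have "\<dots> = (\<Sum>a | a \<in> UNIV \<and> gw \<rho> K a * h a \<noteq> 0. gw \<rho> K a * h a)"
  proof (rule lebesgue_integral_count_space_finite_support)
    show "finite {a \<in> UNIV. gw \<rho> K a * h a \<noteq> 0}"
      using gw_supp[of \<rho> K] by (intro finite_subset[OF _ finS]) (auto simp: S_def)
  qed
  also have "\<dots> = (\<Sum>a\<in>S. gw \<rho> K a * h a)"
  proof (rule sum.mono_neutral_left)
    show "finite S" by (rule finS)
    show "{a. a \<in> UNIV \<and> gw \<rho> K a * h a \<noteq> 0} \<subseteq> S"
      using gw_supp[of \<rho> K] by (auto simp: S_def)
  qed auto
  finally show ?thesis unfolding S_def .
qed

lemma swap_nu:
  "(\<Sum>a\<in>grid_pt K ` {-2 * int K..2 * int K}. gw \<rho> K a * h a)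
   = (\<Sum>l\<in>{-2 * int K..2 * int K}. 2 * pi / (4 * real K + 1) * rhoK \<rho> K (grid_pt K l) * h (grid_pt K l))"
proof -
  define S where "S = grid_pt K ` {-2 * int K..2 * int K}"
  have finS: "finite S" by (simp add: S_def)
  have "(\<Sum>a\<in>S. gw \<rho> K a * h a) = (\<Sum>a\<in>S. \<Sum>l\<in>{-2 * int K..2 * int K}.
        if a = grid_pt K l then 2 * pi / (4 * real K + 1) * rhoK \<rho> K (grid_pt K l) * h a else 0)"
    unfolding gw_def sum_distrib_right by (intro sum.cong refl) auto
  also have "\<dots> = (\<Sum>l\<in>{-2 * int K..2 * int K}. \<Sum>a\<in>S.
        if a = grid_pt K l then 2 * pi / (4 * real K + 1) * rhoK \<rho> K (grid_pt K l) * h a else 0)"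
    by (rule sum.swap)
  also have "\<dots> = (\<Sum>l\<in>{-2 * int K..2 * int K}. 2 * pi / (4 * real K + 1) * rhoK \<rho> K (grid_pt K l) * h (grid_pt K l))"
    using finS by (intro sum.cong refl) (auto simp: S_def)
  finally show ?thesis unfolding S_def .
qed

lemma LBINT_conv: fixes g :: "real \<Rightarrow> real" shows "(LBINT \<theta>=-pi..pi. g \<theta>) = (\<integral>\<theta>. indicator {-pi..pi} \<theta> * g \<theta> \<partial>lborel)"
proof -
  have e: "(- (ereal pi)) = ereal (-pi)" by simp
  show ?thesis unfolding e
    by (subst interval_integral_Icc) (auto simp: set_lebesgue_integral_def)
qed

theorem lemma5p4:
  fixes \<rho> :: "real \<Rightarrow> real"
  assumes nonneg: "\<And>\<theta>. \<theta> \<in> {-pi..pi} \<Longrightarrow> \<rho> \<theta> \<ge> 0"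
    and integrable: "set_integrable lborel {-pi..pi} \<rho>"
    and total: "(LBINT \<theta>=-pi..pi. \<rho> \<theta>) = 1"
    and abs_fourier: "(\<lambda>k. norm (fourier_coeff \<rho> k)) summable_on (UNIV :: int set)"
    and sincos: "(LBINT \<theta>=-pi..pi. \<rho> \<theta> * sin \<theta> * cos \<theta>) = 0"
  shows "(\<forall>K. prob_space (nuK \<rho> K)
            \<and> emeasure (nuK \<rho> K) (UNIV - {-pi..pi}) = 0
            \<and> finite {\<theta>. emeasure (nuK \<rho> K) {\<theta>} \<noteq> 0}
            \<and> (\<integral>\<theta>. cos \<theta> * sin \<theta> \<partial>nuK \<rho> K) = 0)
         \<and> (\<forall>f. continuous_on {-pi..pi} f \<longrightarrow>
           (\<lambda>K. \<integral>\<theta>. f \<theta> \<partial>nuK \<rho> K) \<longlonglongrightarrow> (LBINT \<theta>=-pi..pi. f \<theta> * \<rho> \<theta>))"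
proof -
  define q where "q x = indicator {-pi..pi} x * \<rho> x" for x
  have qint: "integrable lborel q" using integrable unfolding set_integrable_def q_def by simp
  have qmeas[measurable]: "q \<in> borel_measurable borel" using qint by (simp add: borel_measurable_integrable)
  have q0: "q x \<ge> 0" for x using nonneg by (auto simp: q_def indicator_def)
  have qtot: "(\<integral>x. q x \<partial>lborel) = 1" using total unfolding LBINT_conv q_def .
  have qsc: "(\<integral>x. q x * (cos x * sin x) \<partial>lborel) = 0"
    using sincos unfolding LBINT_conv q_def by (simp add: algebra_simps)
  have qpK_int: "integrable lborel (\<lambda>\<psi>. q \<psi> * pK K (a - \<psi>))" for K a
  proof (rule Bochner_Integration.integrable_bound[where f="\<lambda>x. (2 * real K + 1) * q x"])
    show "integrable lborel (\<lambda>x. (2 * real K + 1) * q x)" using qint by simp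
    show "(\<lambda>\<psi>. q \<psi> * pK K (a - \<psi>)) \<in> borel_measurable lborel" by measurable
    show "AE x in lborel. norm (q x * pK K (a - x)) \<le> norm ((2 * real K + 1) * q x)"
    proof (rule AE_I2)
      fix x
      have "q x * pK K (a - x) \<le> q x * (2 * real K + 1)" using pK_bound q0 by (simp add: mult_left_mono)
      then show "norm (q x * pK K (a - x)) \<le> norm ((2 * real K + 1) * q x)"
        using q0[of x] pK_nonneg[of K "a - x"] by (simp add: abs_mult mult.commute)
    qed
  qed
  have rhoK_q: "rhoK \<rho> K (grid_pt K l) = (1/(2*pi)) * (\<integral>\<psi>. q \<psi> * pK K (grid_pt K l - \<psi>) \<partial>lborel)"
    if "l \<in> {-2 * int K..2 * int K}" for K l
    using rhoK_conv[OF integrable grid_in[OF that]] by (simp add: q_def)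
  have pos: "rhoK \<rho> K (grid_pt K l) \<ge> 0" if "l \<in> {-2 * int K..2 * int K}" for K l
    unfolding rhoK_q[OF that] using q0 pK_nonneg by (intro mult_nonneg_nonneg integral_nonneg) auto
  have mainf: "(\<Sum>l\<in>{-2 * int K..2 * int K}. 2 * pi / (4 * real K + 1) * rhoK \<rho> K (grid_pt K l) * h (grid_pt K l))
     = (\<integral>\<psi>. q \<psi> * ((1 / real (4 * K + 1)) * (\<Sum>l\<in>{-2 * int K..2 * int K}. h (grid_pt K l) * pK K (grid_pt K l - \<psi>))) \<partial>lborel)"
    for K and h :: "real \<Rightarrow> real"
  proof -
    have "(\<Sum>l\<in>{-2 * int K..2 * int K}. 2 * pi / (4 * real K + 1) * rhoK \<rho> K (grid_pt K l) * h (grid_pt K l))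
        = (\<Sum>l\<in>{-2 * int K..2 * int K}. (\<integral>\<psi>. (h (grid_pt K l) / real (4 * K + 1)) * (q \<psi> * pK K (grid_pt K l - \<psi>)) \<partial>lborel))"
    proof (intro sum.cong refl)
      fix l assume l: "l \<in> {-2 * int K..2 * int K}"
      show "2 * pi / (4 * real K + 1) * rhoK \<rho> K (grid_pt K l) * h (grid_pt K l)
          = (\<integral>\<psi>. (h (grid_pt K l) / real (4 * K + 1)) * (q \<psi> * pK K (grid_pt K l - \<psi>)) \<partial>lborel)"
      proof -
        define N where "N = 4 * real K + 1"
        have N0: "N \<noteq> 0" unfolding N_def by (simp add: add_nonneg_pos)
        have rN: "real (4 * K + 1) = N" unfolding N_def by simp
        have pi0: "pi \<noteq> 0" by simp
        show ?thesis unfolding rhoK_q[OF l] integral_mult_right_zero N_def[symmetric] rN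
          using N0 pi0 by (simp add: field_simps)
      qed
    qed
    also have "\<dots> = (\<integral>\<psi>. (\<Sum>l\<in>{-2 * int K..2 * int K}. (h (grid_pt K l) / real (4 * K + 1)) * (q \<psi> * pK K (grid_pt K l - \<psi>))) \<partial>lborel)"
      by (rule Bochner_Integration.integral_sum[symmetric]) (intro integrable_mult_right qpK_int)
    also have "\<dots> = (\<integral>\<psi>. q \<psi> * ((1 / real (4 * K + 1)) * (\<Sum>l\<in>{-2 * int K..2 * int K}. h (grid_pt K l) * pK K (grid_pt K l - \<psi>))) \<partial>lborel)"
      by (intro Bochner_Integration.integral_cong refl) (simp add: sum_distrib_left mult_ac)
    finally show ?thesis .
  qed
  have integ: "(\<integral>\<theta>. h \<theta> \<partial>nuK \<rho> K) = (\<integral>\<psi>. q \<psi> * ((1 / real (4 * K + 1)) * (\<Sum>l\<in>{-2 * int K..2 * int K}. h (grid_pt K l) * pK K (grid_pt K l - \<psi>))) \<partial>lborel)"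
    for K and h :: "real \<Rightarrow> real"
  proof -
    have "(\<integral>\<theta>. h \<theta> \<partial>nuK \<rho> K) = (\<Sum>a\<in>grid_pt K ` {-2 * int K..2 * int K}. gw \<rho> K a * h a)"
      by (rule integ_nu) (rule pos)
    also have "\<dots> = (\<Sum>l\<in>{-2 * int K..2 * int K}. 2 * pi / (4 * real K + 1) * rhoK \<rho> K (grid_pt K l) * h (grid_pt K l))"
      by (rule swap_nu)
    also note mainf
    finally show ?thesis .
  qed
  have part1: "prob_space (nuK \<rho> K) \<and> emeasure (nuK \<rho> K) (UNIV - {-pi..pi}) = 0
            \<and> finite {\<theta>. emeasure (nuK \<rho> K) {\<theta>} \<noteq> 0}
            \<and> (\<integral>\<theta>. cos \<theta> * sin \<theta> \<partial>nuK \<rho> K) = 0" for K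
  proof (intro conjI)
    define S where "S = grid_pt K ` {-2 * int K..2 * int K}"
    have SI: "S \<subseteq> {-pi<..<pi}" using grid_in by (auto simp: S_def)
    have em: "emeasure (nuK \<rho> K) X = ennreal (\<Sum>a\<in>S \<inter> X. gw \<rho> K a)" for X
      unfolding S_def by (rule emeas_nu) (rule pos)
    have ig: "(\<integral>\<theta>. h \<theta> \<partial>nuK \<rho> K) = (\<Sum>a\<in>S. gw \<rho> K a * h a)" for h :: "real \<Rightarrow> real"
      unfolding S_def by (rule integ_nu) (rule pos)
    have "emeasure (nuK \<rho> K) UNIV = ennreal (\<Sum>a\<in>S. gw \<rho> K a * 1)"
      unfolding em by simp
    also have "\<dots> = ennreal (\<integral>\<psi>. q \<psi> * ((1 / real (4 * K + 1)) * (\<Sum>l\<in>{-2 * int K..2 * int K}. 1 * pK K (grid_pt K l - \<psi>))) \<partial>lborel)"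
      unfolding S_def swap_nu by (rule arg_cong[where f=ennreal, OF mainf[of K "\<lambda>_. 1"]])
    also have "\<dots> = 1"
    proof -
      have qq: "q \<psi> * ((1 / real (4 * K + 1)) * (\<Sum>l\<in>{-2 * int K..2 * int K}. 1 * pK K (grid_pt K l - \<psi>))) = q \<psi>" for \<psi>
        using quad0[of K \<psi>] by simp
      show ?thesis unfolding qq qtot by simp
    qed
    finally show "prob_space (nuK \<rho> K)" by (intro prob_spaceI) (simp add: nuK_gw space_point_measure)
    have "S \<inter> (UNIV - {-pi..pi}) = {}" using SI by auto
    then show "emeasure (nuK \<rho> K) (UNIV - {-pi..pi}) = 0"
      unfolding em by simp
    have "{\<theta>. emeasure (nuK \<rho> K) {\<theta>} \<noteq> 0} \<subseteq> S"
    proof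
      fix x assume x: "x \<in> {\<theta>. emeasure (nuK \<rho> K) {\<theta>} \<noteq> 0}"
      show "x \<in> S"
      proof (rule ccontr)
        assume "x \<notin> S"
        then have "S \<inter> {x} = {}" by auto
        then have "emeasure (nuK \<rho> K) {x} = 0" unfolding em by simp
        then show False using x by simp
      qed
    qed
    then show "finite {\<theta>. emeasure (nuK \<rho> K) {\<theta>} \<noteq> 0}"
      by (rule finite_subset) (simp add: S_def)
    show "(\<integral>\<theta>. cos \<theta> * sin \<theta> \<partial>nuK \<rho> K) = 0"
    proof (cases "K = 0")
      case True
      show ?thesis unfolding ig S_def swap_nu using True by (simp add: grid_pt_def)
    next
      case False
      then obtain C where C: "\<And>\<psi>. (\<Sum>l\<in>{-2*int K..2*int K}. cos (grid_pt K l) * sin (grid_pt K l) * pK K (grid_pt K l - \<psi>)) = C * (cos \<psi> * sin \<psi>)"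
        using quad2[of K] by auto
      have "(\<integral>\<theta>. cos \<theta> * sin \<theta> \<partial>nuK \<rho> K) = (\<integral>\<psi>. (C / real (4 * K + 1)) * (q \<psi> * (cos \<psi> * sin \<psi>)) \<partial>lborel)"
        unfolding integ C by (simp add: mult_ac)
      also have "\<dots> = 0" unfolding integral_mult_right_zero qsc by simp
      finally show ?thesis .
    qed
  qed
  have part2: "(\<lambda>K. \<integral>\<theta>. f \<theta> \<partial>nuK \<rho> K) \<longlonglongrightarrow> (LBINT \<theta>=-pi..pi. f \<theta> * \<rho> \<theta>)"
    if cont: "continuous_on {-pi..pi} f" for f
  proof -
    have "compact (f ` {-pi..pi})" by (rule compact_continuous_image[OF cont]) simp
    then have "bounded (f ` {-pi..pi})" by (rule compact_imp_bounded)
    then obtain M where M0: "\<forall>y\<in>f ` {-pi..pi}. norm y \<le> M" unfolding bounded_iff by blast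
    then have M: "\<And>x. x \<in> {-pi..pi} \<Longrightarrow> \<bar>f x\<bar> \<le> M" by auto
    define G where "G K \<psi> = (1 / real (4 * K + 1)) * (\<Sum>l\<in>{-2 * int K..2 * int K}. f (grid_pt K l) * pK K (grid_pt K l - \<psi>))" for K \<psi>
    have Gb: "\<bar>G K \<psi>\<bar> \<le> M" for K \<psi>
    proof -
      have "\<bar>\<Sum>l\<in>{-2 * int K..2 * int K}. f (grid_pt K l) * pK K (grid_pt K l - \<psi>)\<bar>
          \<le> (\<Sum>l\<in>{-2 * int K..2 * int K}. \<bar>f (grid_pt K l) * pK K (grid_pt K l - \<psi>)\<bar>)" by (rule sum_abs)
      also have "\<dots> \<le> (\<Sum>l\<in>{-2 * int K..2 * int K}. M * pK K (grid_pt K l - \<psi>))"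
      proof (rule sum_mono)
        fix l assume l: "l \<in> {-2 * int K..2 * int K}"
        have "grid_pt K l \<in> {-pi..pi}" using grid_in[OF l] by auto
        then show "\<bar>f (grid_pt K l) * pK K (grid_pt K l - \<psi>)\<bar> \<le> M * pK K (grid_pt K l - \<psi>)"
          using M pK_nonneg by (simp add: abs_mult mult_right_mono)
      qed
      also have "\<dots> = M * real (4 * K + 1)" unfolding sum_distrib_left[symmetric] quad0 ..
      finally show ?thesis unfolding G_def by (simp add: abs_mult field_simps)
    qed
    have fmeas: "(\<lambda>x. indicator {-pi..pi} x * f x) \<in> borel_measurable borel"
      using borel_measurable_continuous_on_indicator[OF _ cont] by simp
    have qf: "q x * f x = q x * (indicator {-pi..pi} x * f x)" for x by (simp add: q_def indicator_def)
    have "(\<lambda>K. \<integral>\<psi>. q \<psi> * G K \<psi> \<partial>lborel) \<longlonglongrightarrow> (\<integral>\<psi>. q \<psi> * f \<psi> \<partial>lborel)"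
    proof (rule integral_dominated_convergence[where w="\<lambda>x. M * q x"])
      show "(\<lambda>\<psi>. q \<psi> * f \<psi>) \<in> borel_measurable lborel" unfolding qf using fmeas by measurable
      show "(\<lambda>\<psi>. q \<psi> * G K \<psi>) \<in> borel_measurable lborel" for K unfolding G_def by measurable
      show "integrable lborel (\<lambda>x. M * q x)" using qint by simp
      show "AE x in lborel. norm (q x * G K x) \<le> M * q x" for K
      proof (rule AE_I2)
        fix x
        have "q x * \<bar>G K x\<bar> \<le> q x * M" using Gb[of K x] q0[of x] by (rule mult_left_mono)
        then show "norm (q x * G K x) \<le> M * q x" using q0[of x] by (simp add: abs_mult mult.commute)
      qed
      have "AE x in lborel. x \<notin> {-pi, pi}" by (rule AE_discrete_difference) auto
      then show "AE x in lborel. (\<lambda>K. q x * G K x) \<longlonglongrightarrow> q x * f x"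
      proof eventually_elim
        case (elim x)
        show ?case
        proof (cases "x \<in> {-pi..pi}")
          case True
          then have "-pi < x" "x < pi" using elim by auto
          from G_lim[OF cont M this] show ?thesis unfolding G_def by (intro tendsto_mult_left)
        next
          case False
          then show ?thesis by (simp add: q_def)
        qed
      qed
    qed
    moreover have "(\<integral>\<theta>. f \<theta> \<partial>nuK \<rho> K) = (\<integral>\<psi>. q \<psi> * G K \<psi> \<partial>lborel)" for K
      unfolding integ G_def ..
    moreover have "(LBINT \<theta>=-pi..pi. f \<theta> * \<rho> \<theta>) = (\<integral>\<psi>. q \<psi> * f \<psi> \<partial>lborel)"
      unfolding LBINT_conv q_def by (simp add: mult_ac)
    ultimately show ?thesis by simp
  qed
  show ?thesis using part1 part2 by blast
qed

end
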